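(* Let $f\in\mathrm{Conv}_0^+(\mathbb{R}^n,\mathbb{R})$ be a smooth ($C^\infty$) function. If $0\ne y=df(x_0)$ for some $x_0\in\mathbb{R}^n$, then (1) $|f^*(y)|\le(1+2|x_0|)\sup_{|x|\le|x_0|+1}|f(x)|$, and (2) $|y|\le 2\sup_{|x|\le|x_0|+1}|f(x)|$. Moreover, for $R\ge0$ and $y\in\mathbb{R}^n$, $f^*(y)\le(1+2R)\sup_{|x|\le R+1}|f(x)|$ implies $|y|\le 2\sup_{|x|\le R+1}|f(x)|$.
   Context: $\mathrm{Conv}(\mathbb{R}^n,\mathbb{R})$ denotes finite-valued convex functions on $\mathbb{R}^n$. $\mathrm{Conv}_0^+(\mathbb{R}^n,\mathbb{R})$ is the set of $f\in\mathrm{Conv}(\mathbb{R}^n,\mathbb{R})$ with $f(0)=0<f(x)$ for all $x\ne0$ such that $f-\lambda\frac{|\cdot|^2}{2}$ is convex for some $\lambda>0$. $f^*(y)=\sup_{x\in\mathbb{R}^n}(\langle y,x\rangle-f(x))$ is the Legendre transform, and $df(x_0)$ is the gradient of $f$ at $x_0$. *)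

theory Defs
  imports "HOL-Analysis.Analysis"
begin

fun Ck :: "nat \<Rightarrow> ('a::euclidean_space \<Rightarrow> real) \<Rightarrow> bool" where
  "Ck 0 g = continuous_on UNIV g"
| "Ck (Suc k) g = ((\<forall>x. g differentiable (at x)) \<and>
      (\<forall>b\<in>Basis. Ck k (\<lambda>x. frechet_derivative g (at x) b)))"

definition smooth_fun :: "('a::euclidean_space \<Rightarrow> real) \<Rightarrow> bool" where
  "smooth_fun g \<longleftrightarrow> (\<forall>k. Ck k g)"

definition Conv0plus :: "('a::euclidean_space \<Rightarrow> real) \<Rightarrow> bool" where
  "Conv0plus f \<longleftrightarrow> convex_on UNIV f \<and> f 0 = 0 \<and> (\<forall>x. x \<noteq> 0 \<longrightarrow> 0 < f x) \<and>
     (\<exists>c>0. convex_on UNIV (\<lambda>x. f x - c * norm x ^ 2 / 2))"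

text \<open>Legendre transform (finite for the functions considered here).\<close>
definition legendre :: "('a::euclidean_space \<Rightarrow> real) \<Rightarrow> 'a \<Rightarrow> real" where
  "legendre f y = (SUP x. inner y x - f x)"

end

theory Submission
  imports Defs
begin

lemma tangent:
  fixes f :: "'a::euclidean_space \<Rightarrow> real"
  assumes cv: "convex_on UNIV f" and d: "GDERIV f x0 :> y"
  shows "f x \<ge> f x0 + inner y (x - x0)"
proof -
  define g where "g = (\<lambda>t::real. x0 + t *\<^sub>R (x - x0))"
  have gd: "(g has_derivative (\<lambda>t. t *\<^sub>R (x - x0))) (at 0)"
    unfolding g_def by (auto intro!: derivative_eq_intros)
  have fd: "(f has_derivative (\<lambda>h. inner h y)) (at (g 0))"
    using d unfolding gderiv_def g_def by simp
  have "((f \<circ> g) has_derivative (\<lambda>t. inner (t *\<^sub>R (x - x0)) y)) (at 0)"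
    using has_derivative_compose[OF gd fd] by (simp add: o_def)
  moreover have "(\<lambda>t. inner (t *\<^sub>R (x - x0)) y) = (*) (inner (x - x0) y)"
    by (auto simp: fun_eq_iff)
  ultimately have "((f \<circ> g) has_field_derivative (inner (x - x0) y)) (at 0)"
    unfolding has_field_derivative_def by simp
  moreover have cvg: "convex_on UNIV (f \<circ> g)"
  proof (rule convex_onI)
    fix t :: real and a b :: real assume "0 < t" "t < 1"
    have "g ((1 - t) *\<^sub>R a + t *\<^sub>R b) = (1 - t) *\<^sub>R g a + t *\<^sub>R g b"
      unfolding g_def by (simp add: algebra_simps)
    thus "(f \<circ> g) ((1 - t) *\<^sub>R a + t *\<^sub>R b) \<le> (1 - t) * (f \<circ> g) a + t * (f \<circ> g) b"
      using convex_onD[OF cv, of t "g a" "g b"] \<open>0 < t\<close> \<open>t < 1\<close> by simp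
  qed simp
  ultimately have "(f \<circ> g) 1 - (f \<circ> g) 0 \<ge> inner (x - x0) y * (1 - 0)"
    using convex_on_imp_above_tangent[OF cvg connected_UNIV, of 0 1 "inner (x - x0) y"] by simp
  thus ?thesis unfolding g_def by (simp add: inner_commute)
qed

lemma quad:
  fixes f :: "'a::euclidean_space \<Rightarrow> real"
  assumes f0: "f 0 = 0" and fpos: "\<And>x. f x \<ge> 0" and c: "c > 0"
    and cv: "convex_on UNIV (\<lambda>x. f x - c * norm x ^ 2 / 2)"
  shows "f x \<ge> c * norm x ^ 2 / 2"
proof (rule ccontr)
  assume nt: "\<not> ?thesis"
  define a where "a = c * norm x ^ 2 / 2"
  define b where "b = a - f x"
  have b: "b > 0" using nt unfolding a_def b_def by simp
  have a: "a > 0" using b fpos[of x] unfolding b_def by simp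
  define t where "t = min (1/2) (b / (2 * a))"
  have t: "0 < t" "t < 1" "t * a < b" using a b unfolding t_def by (auto simp: min_def field_simps)
  have "f (t *\<^sub>R x) - c * norm (t *\<^sub>R x) ^ 2 / 2 \<le> (1 - t) * (f 0 - c * norm (0::'a) ^ 2 / 2) + t * (f x - c * norm x ^ 2 / 2)"
    using convex_onD[OF cv, of t 0 x] t by simp
  hence "f (t *\<^sub>R x) - t^2 * a \<le> t * (f x - a)"
    using f0 t by (simp add: a_def power_mult_distrib algebra_simps)
  hence "- (t^2 * a) \<le> t * (- b)" using fpos[of "t *\<^sub>R x"] unfolding b_def by simp
  hence "t * (t * a) \<ge> t * b" by (simp add: power2_eq_square algebra_simps)
  hence "t * a \<ge> b" using t by simp
  thus False using t by simp
qed

theorem lemma2p5: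
  fixes f :: "'a::euclidean_space \<Rightarrow> real"
  assumes "Conv0plus f" and "smooth_fun f"
  shows "(\<forall>x0 y. y \<noteq> 0 \<and> (GDERIV f x0 :> y) \<longrightarrow>
            \<bar>legendre f y\<bar> \<le> (1 + 2 * norm x0) * (SUP x\<in>cball 0 (norm x0 + 1). \<bar>f x\<bar>) \<and>
            norm y \<le> 2 * (SUP x\<in>cball 0 (norm x0 + 1). \<bar>f x\<bar>))
       \<and> (\<forall>R y. R \<ge> 0 \<and> legendre f y \<le> (1 + 2 * R) * (SUP x\<in>cball 0 (R + 1). \<bar>f x\<bar>) \<longrightarrow>
            norm y \<le> 2 * (SUP x\<in>cball 0 (R + 1). \<bar>f x\<bar>))"
proof -
  from assms(1) obtain c where cv: "convex_on UNIV f" and f0: "f 0 = 0"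
    and pos: "\<And>x. x \<noteq> 0 \<Longrightarrow> 0 < f x" and c: "c > 0"
    and cvq: "convex_on UNIV (\<lambda>x. f x - c * norm x ^ 2 / 2)"
    unfolding Conv0plus_def by blast
  have fge: "f x \<ge> 0" for x using pos[of x] f0 by (cases "x = 0") auto
  have cont: "continuous_on UNIV f" using convex_on_continuous[OF _ cv] by simp
  have bddM: "bdd_above ((\<lambda>x. \<bar>f x\<bar>) ` cball 0 r)" for r :: real
  proof -
    have "continuous_on (cball 0 r) (\<lambda>x. \<bar>f x\<bar>)"
      by (intro continuous_intros continuous_on_subset[OF cont]) auto
    hence "compact ((\<lambda>x. \<bar>f x\<bar>) ` cball 0 r)" by (intro compact_continuous_image) auto
    then obtain B where "\<forall>z\<in>(\<lambda>x. \<bar>f x\<bar>) ` cball 0 r. norm z \<le> B"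
      using compact_imp_bounded bounded_iff by metis
    hence "\<And>z. z \<in> (\<lambda>x. \<bar>f x\<bar>) ` cball 0 r \<Longrightarrow> z \<le> B" by force
    thus ?thesis by (rule bdd_aboveI)
  qed
  have leM: "\<bar>f x\<bar> \<le> (SUP x\<in>cball 0 r. \<bar>f x\<bar>)" if "norm x \<le> r" for x r
    using cSUP_upper[OF _ bddM[of r], of x] that by simp
  have M0: "0 \<le> (SUP x\<in>cball 0 r. \<bar>f x\<bar>)" if "r \<ge> 0" for r
    using leM[of 0 r] that by simp
  have bddL: "bdd_above (range (\<lambda>x. inner y x - f x))" for y
  proof (rule bdd_aboveI2)
    fix x
    have q: "f x \<ge> c * norm x ^ 2 / 2" by (rule quad[OF f0 fge c cvq])
    have "inner y x \<le> norm y * norm x" by (rule norm_cauchy_schwarz)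
    moreover have "0 \<le> (norm y - c * norm x)^2" by simp
    ultimately have h1: "c * inner y x \<le> c * (norm y * norm x)" "0 \<le> (norm y - c * norm x)^2"
      using c by (auto intro: mult_left_mono)
    have h2: "c * (c * norm x ^ 2) \<le> c * (2 * f x)" using q c by (intro mult_left_mono) auto
    have e: "(norm y - c * norm x)^2 = norm y^2 - 2 * (c * (norm y * norm x)) + c * (c * norm x^2)"
      by (simp add: power2_eq_square algebra_simps)
    have e2: "c * (norm y ^ 2 / (2 * c)) = norm y ^ 2 / 2" using c by simp
    have e3: "c * (inner y x - f x) = c * inner y x - c * f x" by (simp add: algebra_simps)
    have e4: "c * (2 * f x) = 2 * (c * f x)" by simp
    have "c * (inner y x - f x) \<le> c * (norm y ^ 2 / (2 * c))"
      unfolding e2 e3 using h1 h2 e e4 by linarith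
    thus "inner y x - f x \<le> norm y ^ 2 / (2 * c)" using c by (simp only: mult_le_cancel_left_pos)
  qed
  have Lge: "legendre f y \<ge> inner y x - f x" for y x
    unfolding legendre_def by (rule cSUP_upper[OF _ bddL]) simp
  have P1: "\<bar>legendre f y\<bar> \<le> (1 + 2 * norm x0) * (SUP x\<in>cball 0 (norm x0 + 1). \<bar>f x\<bar>) \<and>
            norm y \<le> 2 * (SUP x\<in>cball 0 (norm x0 + 1). \<bar>f x\<bar>)"
    if y0: "y \<noteq> 0" and d: "GDERIV f x0 :> y" for x0 y
  proof -
    define M where "M = (SUP x\<in>cball 0 (norm x0 + 1). \<bar>f x\<bar>)"
    have M0': "M \<ge> 0" unfolding M_def by (rule M0) simp
    have tg: "f x \<ge> f x0 + inner y (x - x0)" for x by (rule tangent[OF cv d])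
    have L: "legendre f y = inner y x0 - f x0"
      unfolding legendre_def
    proof (rule cSup_eq_maximum)
      show "inner y x0 - f x0 \<in> range (\<lambda>x. inner y x - f x)" by simp
      fix z assume "z \<in> range (\<lambda>x. inner y x - f x)"
      then obtain x where "z = inner y x - f x" by blast
      thus "z \<le> inner y x0 - f x0" using tg[of x] by (simp add: inner_diff_right)
    qed
    define u where "u = (1 / norm y) *\<^sub>R y"
    have nu: "norm u = 1" using y0 unfolding u_def by simp
    have iu: "inner y u = norm y" using y0 unfolding u_def by (simp add: power2_norm_eq_inner[symmetric] power2_eq_square)
    have "norm (x0 + u) \<le> norm x0 + 1" using norm_triangle_ineq[of x0 u] nu by simp
    hence "\<bar>f (x0 + u)\<bar> \<le> M" unfolding M_def by (rule leM)
    moreover have "f (x0 + u) \<ge> f x0 + norm y" using tg[of "x0 + u"] iu by simp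
    ultimately have ny: "norm y \<le> M" using fge[of x0] by simp
    have fx0: "f x0 \<le> M" using leM[of x0 "norm x0 + 1"] unfolding M_def by simp
    have "\<bar>inner y x0\<bar> \<le> norm y * norm x0" by (rule Cauchy_Schwarz_ineq2)
    also have "\<dots> \<le> M * norm x0" using ny by (simp add: mult_right_mono)
    finally have "\<bar>legendre f y\<bar> \<le> M * norm x0 + M" using L fx0 fge[of x0] by simp
    also have "\<dots> \<le> (1 + 2 * norm x0) * M" using M0' by (simp add: algebra_simps)
    finally show ?thesis using ny M0' unfolding M_def by simp
  qed
  have P2: "norm y \<le> 2 * (SUP x\<in>cball 0 (R + 1). \<bar>f x\<bar>)"
    if R: "R \<ge> 0" and Ly: "legendre f y \<le> (1 + 2 * R) * (SUP x\<in>cball 0 (R + 1). \<bar>f x\<bar>)" for R y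
  proof -
    define M where "M = (SUP x\<in>cball 0 (R + 1). \<bar>f x\<bar>)"
    have M0': "M \<ge> 0" unfolding M_def by (rule M0) (use R in simp)
    show ?thesis
    proof (cases "y = 0")
      case True thus ?thesis using M0' unfolding M_def by simp
    next
      case False
      define x where "x = ((R + 1) / norm y) *\<^sub>R y"
      have nx: "norm x = R + 1" using False R unfolding x_def by simp
      have ix: "inner y x = (R + 1) * norm y" using False unfolding x_def
        by (simp add: power2_norm_eq_inner[symmetric] power2_eq_square)
      have "\<bar>f x\<bar> \<le> M" unfolding M_def by (rule leM) (simp add: nx)
      hence "(R + 1) * norm y \<le> (1 + 2 * R) * M + M"
        using Lge[of y x] ix Ly unfolding M_def by simp
      hence "(R + 1) * norm y \<le> (R + 1) * (2 * M)" by (simp add: algebra_simps)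
      hence "norm y \<le> 2 * M" using R by (smt (verit) mult_le_cancel_left)
      thus ?thesis unfolding M_def .
    qed
  qed
  show ?thesis using P1 P2 by blast
qed

end
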